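(* Let $G$ be a finitely generated infinite discrete group with infinite commutator width, $\mathrm{cl}(G)=\infty$. For $K\in\mathbb{Z}_{\ge0}$ let $W_K\subseteq[G,G]$ be the set of elements of $G$ that can be written as a product of at most $K$ commutators. Then for every $K\in\mathbb{Z}_{\ge 0}$ there is no finite subset $F\subseteq G$ such that $G=\bigcup_{t\in F} t\,W_K$; that is, any set $T_K\subseteq G$ with $G=\bigcup_{t\in T_K}tW_K$ must be infinite.
   Context: $[a,b]=aba^{-1}b^{-1}$. For $x\in[G,G]$, $\mathrm{cl}_G(x)$ is the least number of commutators whose product is $x$; the commutator width is $\mathrm{cl}(G)=\sup_{x\in[G,G]}\mathrm{cl}_G(x)\in\mathbb{Z}_{\ge0}\cup\{\infty\}$. *)

theory Defs
  imports "HOL-Algebra.Algebra"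
begin

definition comm_prod_le :: "('a, 'b) monoid_scheme \<Rightarrow> nat \<Rightarrow> 'a set" where
  "comm_prod_le G K = {x. \<exists>cs. length cs \<le> K \<and> set cs \<subseteq> derived_set G (carrier G)
      \<and> x = foldr (\<lambda>c y. c \<otimes>\<^bsub>G\<^esub> y) cs \<one>\<^bsub>G\<^esub>}"

definition finitely_generated_group :: "('a, 'b) monoid_scheme \<Rightarrow> bool" where
  "finitely_generated_group G \<longleftrightarrow>
     (\<exists>S. finite S \<and> S \<subseteq> carrier G \<and> generate G S = carrier G)"

definition infinite_commutator_width :: "('a, 'b) monoid_scheme \<Rightarrow> bool" where
  "infinite_commutator_width G \<longleftrightarrow>
     (\<forall>K. \<not> derived G (carrier G) \<subseteq> comm_prod_le G K)"

end

theory Submission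
  imports Defs
begin

context group
begin

lemma foldr_carrier:
  "set cs \<subseteq> carrier G \<Longrightarrow> foldr (\<lambda>c y. c \<otimes> y) cs \<one> \<in> carrier G"
  by (induct cs) auto

lemma foldr_append_mult:
  assumes "set cs \<subseteq> carrier G" "set ds \<subseteq> carrier G"
  shows "foldr (\<lambda>c y. c \<otimes> y) (cs @ ds) \<one>
     = foldr (\<lambda>c y. c \<otimes> y) cs \<one> \<otimes> foldr (\<lambda>c y. c \<otimes> y) ds \<one>"
  using assms
proof (induct cs)
  case Nil
  then show ?case using foldr_carrier[of ds] by simp
next
  case (Cons a cs)
  then show ?case using foldr_carrier[of ds] foldr_carrier[of cs] by (simp add: m_assoc)
qed

lemma comm_prod_le_mult:
  assumes "x \<in> comm_prod_le G m" "y \<in> comm_prod_le G n"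
  shows "x \<otimes> y \<in> comm_prod_le G (m + n)"
proof -
  obtain cs where cs: "length cs \<le> m" "set cs \<subseteq> derived_set G (carrier G)"
    "x = foldr (\<lambda>c y. c \<otimes> y) cs \<one>"
    using assms(1) unfolding comm_prod_le_def by blast
  obtain ds where ds: "length ds \<le> n" "set ds \<subseteq> derived_set G (carrier G)"
    "y = foldr (\<lambda>c y. c \<otimes> y) ds \<one>"
    using assms(2) unfolding comm_prod_le_def by blast
  have sub: "derived_set G (carrier G) \<subseteq> carrier G"
    using derived_set_in_carrier by simp
  have c1: "set cs \<subseteq> carrier G" using cs(2) sub by (rule subset_trans)
  have c2: "set ds \<subseteq> carrier G" using ds(2) sub by (rule subset_trans)
  have "x \<otimes> y = foldr (\<lambda>c y. c \<otimes> y) (cs @ ds) \<one>"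
    unfolding cs(3) ds(3) by (rule foldr_append_mult[OF c1 c2, symmetric])
  moreover have "length (cs @ ds) \<le> m + n" using cs ds by simp
  moreover have "set (cs @ ds) \<subseteq> derived_set G (carrier G)" using cs ds by simp
  ultimately show ?thesis unfolding comm_prod_le_def by blast
qed

lemma comm_prod_le_mono:
  assumes "x \<in> comm_prod_le G m" "m \<le> n" shows "x \<in> comm_prod_le G n"
proof -
  obtain cs where "length cs \<le> m" "set cs \<subseteq> derived_set G (carrier G)"
    "x = foldr (\<lambda>c y. c \<otimes> y) cs \<one>"
    using assms(1) unfolding comm_prod_le_def by blast
  moreover have "length cs \<le> n" using calculation(1) assms(2) by linarith
  ultimately show ?thesis unfolding comm_prod_le_def by blast
qed

lemma comm_prod_le_one: "\<one> \<in> comm_prod_le G 0"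
  unfolding comm_prod_le_def by (rule CollectI, rule exI[of _ "[]"]) simp

lemma comm_prod_le_single:
  assumes "h \<in> derived_set G (carrier G)" shows "h \<in> comm_prod_le G 1"
proof -
  have "h \<in> carrier G" using assms derived_set_in_carrier by blast
  then show ?thesis unfolding comm_prod_le_def using assms
    by (intro CollectI exI[of _ "[h]"]) (simp only: list.set length_Cons list.size foldr_Cons foldr_Nil o_apply id_apply, simp)
qed

lemma inv_comm_in:
  assumes "h \<in> derived_set G (carrier G)" shows "inv h \<in> derived_set G (carrier G)"
proof -
  obtain a b where ab: "a \<in> carrier G" "b \<in> carrier G" "h = a \<otimes> b \<otimes> inv a \<otimes> inv b"
    using assms by blast
  have "inv h = b \<otimes> a \<otimes> inv b \<otimes> inv a"
    using ab by (simp add: inv_mult_group m_assoc)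
  then show ?thesis using ab by blast
qed

lemma derived_finite_len:
  assumes "x \<in> derived G (carrier G)" shows "\<exists>n. x \<in> comm_prod_le G n"
proof -
  have "x \<in> generate G (derived_set G (carrier G))" using assms unfolding derived_def .
  then show ?thesis
  proof (induct rule: generate.induct)
    case one
    show ?case by (rule exI[of _ 0], rule comm_prod_le_one)
  next
    case (incl h)
    show ?case by (rule exI[of _ 1], rule comm_prod_le_single[OF incl])
  next
    case (inv h)
    show ?case by (rule exI[of _ 1], rule comm_prod_le_single[OF inv_comm_in[OF inv]])
  next
    case (eng h1 h2)
    from eng(2) obtain m where m: "h1 \<in> comm_prod_le G m" by (elim exE)
    from eng(4) obtain n where n: "h2 \<in> comm_prod_le G n" by (elim exE)
    show ?case by (rule exI[of _ "m + n"], rule comm_prod_le_mult[OF m n])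
  qed
qed

lemma comm_prod_le_sub: "comm_prod_le G K \<subseteq> derived G (carrier G)"
proof
  fix x assume "x \<in> comm_prod_le G K"
  then obtain cs where cs: "set cs \<subseteq> derived_set G (carrier G)"
    "x = foldr (\<lambda>c y. c \<otimes> y) cs \<one>"
    unfolding comm_prod_le_def by blast
  have S: "subgroup (derived G (carrier G)) G" using derived_is_subgroup by simp
  have "set cs \<subseteq> derived_set G (carrier G) \<Longrightarrow>
        foldr (\<lambda>c y. c \<otimes> y) cs \<one> \<in> derived G (carrier G)"
  proof (induct cs)
    case Nil then show ?case using subgroup.one_closed[OF S] by simp
  next
    case (Cons a cs)
    then have "a \<in> derived G (carrier G)"
      unfolding derived_def by (auto intro: generate.incl)
    then show ?case using Cons subgroup.m_closed[OF S] by simp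
  qed
  then show "x \<in> derived G (carrier G)" using cs by simp
qed

end

theorem mainTheorem2:
  fixes G (structure)
  assumes "group G"
    and "finitely_generated_group G"
    and "infinite (carrier G)"
    and "infinite_commutator_width G"
  shows "\<forall>K::nat. \<not> (\<exists>F. finite F \<and> F \<subseteq> carrier G \<and>
            carrier G = (\<Union>t\<in>F. t <# comm_prod_le G K))"
proof (intro allI notI)
  interpret group G by fact
  fix K
  assume "\<exists>F. finite F \<and> F \<subseteq> carrier G \<and> carrier G = (\<Union>t\<in>F. t <# comm_prod_le G K)"
  then obtain F where F: "finite F" "F \<subseteq> carrier G"
    "carrier G = (\<Union>t\<in>F. t <# comm_prod_le G K)" by blast
  define D where "D = derived G (carrier G)"
  have S: "subgroup D G" unfolding D_def using derived_is_subgroup by simp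
  have "\<forall>t \<in> F \<inter> D. \<exists>n. t \<in> comm_prod_le G n"
    using derived_finite_len unfolding D_def by blast
  then obtain len where len: "\<And>t. t \<in> F \<inter> D \<Longrightarrow> t \<in> comm_prod_le G (len t)"
    by metis
  define N where "N = Max (len ` (F \<inter> D)) + K"
  have "D \<subseteq> comm_prod_le G N"
  proof
    fix x assume xD: "x \<in> D"
    then have "x \<in> carrier G" using subgroup.mem_carrier[OF S] by blast
    then obtain t w where tw: "t \<in> F" "w \<in> comm_prod_le G K" "x = t \<otimes> w"
      using F(3) unfolding l_coset_def by blast
    have wD: "w \<in> D" using tw(2) comm_prod_le_sub unfolding D_def by blast
    have tc: "t \<in> carrier G" using tw F(2) by blast
    have wc: "w \<in> carrier G" using wD subgroup.mem_carrier[OF S] by blast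
    have "t = x \<otimes> inv w" using tw tc wc by (simp add: m_assoc)
    then have tD: "t \<in> D" using xD wD subgroup.m_closed[OF S] subgroup.m_inv_closed[OF S]
      by simp
    have "len t \<le> Max (len ` (F \<inter> D))" using F(1) tD tw(1) by simp
    have "x \<in> comm_prod_le G (len t + K)"
      using comm_prod_le_mult[OF len[of t] tw(2)] tD tw by simp
    then show "x \<in> comm_prod_le G N"
      using comm_prod_le_mono \<open>len t \<le> _\<close> unfolding N_def by simp
  qed
  then show False using assms(4) unfolding infinite_commutator_width_def D_def by blast
qed

end
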